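(* As $\tau\to\infty$, $$J(\tau;f,g)=O\Big(\tau e^{-\tau\min_{x\in\partial D,\,y\in\partial B,\,y'\in\partial B'}\phi(x;y,y')}\Big).$$
   Context: Let $D\subset\mathbb R^3$ be a nonempty bounded open set with $C^2$ boundary. $B,B'$ are open balls with $\overline B\cap\overline D=\overline{B'}\cap\overline D=\emptyset$, $f=\chi_B$, $g=\chi_{B'}$. For $h\in L^2(\mathbb R^3)$ and $\tau>0$, $v_h(x)=\frac1{4\pi}\int\frac{e^{-\tau|x-y|}}{|x-y|}h(y)dy$. $J(\tau;f,g)=\int_D(\nabla v_f\cdot\nabla v_g+\tau^2v_fv_g)dx$. $\phi(x;y,y')=|y-x|+|x-y'|$. *)

theory Defs
  imports "HOL-Analysis.Analysis"
begin

definition partial_deriv :: "('n::finite) \<Rightarrow> (real^'n \<Rightarrow> real) \<Rightarrow> real^'n \<Rightarrow> real" where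
  "partial_deriv i u x = frechet_derivative u (at x) (axis i 1)"

definition grad :: "(real^'n::finite \<Rightarrow> real) \<Rightarrow> real^'n \<Rightarrow> real^'n" where
  "grad u x = (\<chi> i. partial_deriv i u x)"

definition C2_on :: "(real^'n::finite) set \<Rightarrow> (real^'n \<Rightarrow> real) \<Rightarrow> bool" where
  "C2_on U u \<longleftrightarrow> open U \<and> u differentiable_on U \<and>
     (\<forall>i. (partial_deriv i u) differentiable_on U) \<and>
     (\<forall>i j. continuous_on U (partial_deriv j (partial_deriv i u)))"

definition C2_boundary :: "(real^3) set \<Rightarrow> bool" where
  "C2_boundary D \<longleftrightarrow> (\<forall>p \<in> frontier D. \<exists>r>0. \<exists>T :: real^3 \<Rightarrow> real^3. \<exists>a :: real^3. \<exists>h :: real^2 \<Rightarrow> real.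
      orthogonal_transformation T \<and> C2_on UNIV h \<and>
      D \<inter> ball p r =
        {x \<in> ball p r. (T (x - a)) $ 3 < h (vector [(T (x - a)) $ 1, (T (x - a)) $ 2])})"

definition v_pot :: "real \<Rightarrow> (real^3 \<Rightarrow> real) \<Rightarrow> real^3 \<Rightarrow> real" where
  "v_pot \<tau> h x = (1 / (4 * pi)) *
     (\<integral>y. exp (- \<tau> * norm (x - y)) / norm (x - y) * h y \<partial>lborel)"

definition J_fun :: "(real^3) set \<Rightarrow> real \<Rightarrow> (real^3 \<Rightarrow> real) \<Rightarrow> (real^3 \<Rightarrow> real) \<Rightarrow> real" where
  "J_fun D \<tau> f g = (LINT x:D|lborel.
      grad (v_pot \<tau> f) x \<bullet> grad (v_pot \<tau> g) x + \<tau>\<^sup>2 * v_pot \<tau> f x * v_pot \<tau> g x)"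

definition phi :: "real^3 \<Rightarrow> real^3 \<Rightarrow> real^3 \<Rightarrow> real" where
  "phi x y y' = norm (y - x) + norm (x - y')"

end

theory Submission
  imports Defs
begin


definition kk :: "real \<Rightarrow> real^3 \<Rightarrow> real" where
  "kk \<tau> z = exp (- \<tau> * norm z) / norm z"

definition gk :: "real \<Rightarrow> real^3 \<Rightarrow> real^3" where
  "gk \<tau> z = - (exp (- \<tau> * norm z) * (\<tau> * norm z + 1) / norm z ^ 3) *\<^sub>R z"

lemma kk_deriv:
  assumes "z \<noteq> 0"
  shows "(kk \<tau> has_derivative (\<lambda>h. gk \<tau> z \<bullet> h)) (at z)"
proof -
  have n: "(norm has_derivative (\<lambda>h. sgn z \<bullet> h)) (at z)"
    using has_derivative_norm[OF assms] by (simp add: inner_commute)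
  have "((\<lambda>z. exp (- \<tau> * norm z) / norm z) has_derivative
     (\<lambda>h. (exp (- \<tau> * norm z) * (- \<tau> * (sgn z \<bullet> h))) / norm z
        - exp (- \<tau> * norm z) * (sgn z \<bullet> h) / (norm z)^2)) (at z)"
    using assms
    by (auto intro!: derivative_eq_intros n simp: power2_eq_square field_simps)
  moreover have "\<And>h. (exp (- \<tau> * norm z) * (- \<tau> * (sgn z \<bullet> h))) / norm z
        - exp (- \<tau> * norm z) * (sgn z \<bullet> h) / (norm z)^2 = gk \<tau> z \<bullet> h"
    using assms unfolding gk_def sgn_div_norm
    by (simp add: field_simps power2_eq_square power3_eq_cube inner_scaleR_left)
  ultimately show ?thesis unfolding kk_def by simp
qed

lemma kk_measurable[measurable]: "(\<lambda>t. kk \<tau> (x - t)) \<in> borel_measurable borel"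
  unfolding kk_def by measurable

lemma gk_measurable[measurable]: "(\<lambda>t. gk \<tau> (x - t)) \<in> borel_measurable borel"
  unfolding gk_def by measurable

lemma kk_cont: "x \<notin> S \<Longrightarrow> continuous_on S (\<lambda>t. kk \<tau> (x - t))"
  unfolding kk_def by (intro continuous_intros) auto

lemma gk_cont: "x \<notin> S \<Longrightarrow> continuous_on S (\<lambda>t. gk \<tau> (x - t))"
  unfolding gk_def by (intro continuous_intros) auto

lemma integrable_w:
  fixes g :: "real^3 \<Rightarrow> 'b::{banach,second_countable_topology}"
  assumes S: "compact S" and g: "continuous_on S g" "g \<in> borel_measurable borel"
    and wm: "w \<in> borel_measurable borel" and wb: "\<And>t. \<bar>w t\<bar> \<le> 1"
    and w0: "\<And>t. t \<notin> S \<Longrightarrow> w t = 0"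
  shows "integrable lborel (\<lambda>t. w t *\<^sub>R g t)"
proof (rule Bochner_Integration.integrable_bound[OF borel_integrable_compact[OF S g(1)]])
  show "(\<lambda>t. w t *\<^sub>R g t) \<in> borel_measurable lborel" using g wm by measurable
  show "AE x in lborel. norm (w x *\<^sub>R g x) \<le> norm (indicator S x *\<^sub>R g x)"
  proof (intro AE_I2)
    fix x show "norm (w x *\<^sub>R g x) \<le> norm (indicator S x *\<^sub>R g x)"
    proof (cases "x \<in> S")
      case True then show ?thesis using wb[of x] by (auto intro: mult_left_le_one_le)
    qed (simp add: w0)
  qed
qed

lemma diff_under_int:
  fixes w :: "real^3 \<Rightarrow> real"
  assumes S: "compact S" and x0: "x0 \<notin> S" and wm: "w \<in> borel_measurable borel"
    and wb: "\<And>t. \<bar>w t\<bar> \<le> 1" and w0: "\<And>t. t \<notin> S \<Longrightarrow> w t = 0"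
  shows "((\<lambda>x. \<integral>t. kk \<tau> (x - t) * w t \<partial>lborel) has_derivative
          (\<lambda>h. (\<integral>t. w t *\<^sub>R gk \<tau> (x0 - t) \<partial>lborel) \<bullet> h)) (at x0)"
proof -
  define G where "G = (\<integral>t. w t *\<^sub>R gk \<tau> (x0 - t) \<partial>lborel)"
  have intk: "integrable lborel (\<lambda>t. kk \<tau> (x - t) * w t)" if "x \<notin> S" for x
    using integrable_w[OF S kk_cont[OF that] kk_measurable wm wb w0] by (simp add: mult.commute)
  have intg: "integrable lborel (\<lambda>t. w t *\<^sub>R gk \<tau> (x0 - t))"
    using integrable_w[OF S gk_cont[OF x0] gk_measurable wm wb w0] .
  obtain \<epsilon> where \<epsilon>: "\<epsilon> > 0" "cball x0 \<epsilon> \<inter> S = {}"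
  proof -
    have "open (- S)" using S by (simp add: compact_imp_closed open_Compl)
    then obtain e where "e > 0" "ball x0 e \<subseteq> - S" using x0 open_contains_ball by blast
    moreover have "cball x0 (e/2) \<subseteq> ball x0 e" using \<open>e > 0\<close> by (auto simp: subset_eq)
    ultimately show ?thesis by (intro that[of "e/2"]) auto
  qed
  define K where "K = cball x0 \<epsilon> \<times> S"
  have Kc: "compact K" unfolding K_def using S by (simp add: compact_Times)
  have "continuous_on K (\<lambda>p. gk \<tau> (fst p - snd p))"
    unfolding K_def gk_def using \<epsilon>
    by (intro continuous_intros) (auto simp: mem_Times_iff)
  then have uc: "uniformly_continuous_on K (\<lambda>p. gk \<tau> (fst p - snd p))"
    using Kc compact_uniformly_continuous by blast
  define \<mu> where "\<mu> = measure lborel S"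
  have \<mu>: "\<mu> \<ge> 0" by (simp add: \<mu>_def)
  show ?thesis
    unfolding has_derivative_at_alt G_def[symmetric]
  proof (intro conjI allI impI)
    show "bounded_linear ((\<bullet>) G)" by (rule bounded_linear_inner_right)
    fix e :: real assume e: "e > 0"
    define e1 where "e1 = e / (\<mu> + 1)"
    have e1: "e1 > 0" unfolding e1_def using e \<mu> by simp
    obtain d where d: "d > 0" and dd: "\<And>p p'. p \<in> K \<Longrightarrow> p' \<in> K \<Longrightarrow> dist p' p < d \<Longrightarrow>
        dist ((\<lambda>p. gk \<tau> (fst p - snd p)) p') ((\<lambda>p. gk \<tau> (fst p - snd p)) p) < e1"
      using uc e1 unfolding uniformly_continuous_on_def by metis
    define d' where "d' = min \<epsilon> d"
    have d': "d' > 0" using d \<epsilon> by (simp add: d'_def)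
    have bS: "z \<in> cball x0 \<epsilon> \<and> z \<notin> S" if "z \<in> ball x0 d'" for z
    proof -
      have "z \<in> cball x0 \<epsilon>" using that by (simp add: d'_def)
      then show ?thesis using \<epsilon>(2) by blast
    qed
    show "\<exists>d>0. \<forall>y. norm (y - x0) < d \<longrightarrow>
        norm ((\<integral>t. kk \<tau> (y - t) * w t \<partial>lborel) - (\<integral>t. kk \<tau> (x0 - t) * w t \<partial>lborel) - G \<bullet> (y - x0))
          \<le> e * norm (y - x0)"
    proof (intro exI[of _ d'] conjI allI impI d')
      fix y assume y: "norm (y - x0) < d'"
      have "y \<in> cball x0 \<epsilon>" using y by (simp add: d'_def dist_norm norm_minus_commute)
      then have yS: "y \<notin> S" using \<epsilon>(2) by blast
      have pt: "norm (kk \<tau> (y - t) - kk \<tau> (x0 - t) - gk \<tau> (x0 - t) \<bullet> (y - x0)) \<le> norm (y - x0) * e1"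
        if t: "t \<in> S" for t
      proof (rule differentiable_bound_linearization[of x0 y "ball x0 d'"
            "\<lambda>x. kk \<tau> (x - t)" "\<lambda>x h. gk \<tau> (x - t) \<bullet> h" x0 e1])
        show "x0 + s *\<^sub>R (y - x0) \<in> ball x0 d'" if "s \<in> {0..1}" for s
        proof -
          have "norm (s *\<^sub>R (y - x0)) \<le> norm (y - x0)" using that by (auto intro: mult_left_le_one_le)
          then show ?thesis using y by (simp add: dist_norm)
        qed
        show "x0 \<in> ball x0 d'" using d' by simp
        fix x assume x: "x \<in> ball x0 d'"
        have xS: "x \<noteq> t" using bS[OF x] t by blast
        have "((\<lambda>x. kk \<tau> (x - t)) has_derivative (\<lambda>h. gk \<tau> (x - t) \<bullet> (h - 0))) (at x)"
          by (rule has_derivative_compose[of "\<lambda>x. x - t" "\<lambda>h. h - 0", unfolded o_def,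
                OF _ kk_deriv]) (auto intro!: derivative_eq_intros simp: xS)
        then show "((\<lambda>x. kk \<tau> (x - t)) has_derivative (\<lambda>h. gk \<tau> (x - t) \<bullet> h)) (at x within ball x0 d')"
          by (simp add: has_derivative_at_withinI)
        have pK: "(x, t) \<in> K" "(x0, t) \<in> K" using bS[OF x] t \<epsilon> by (auto simp: K_def)
        have "dist (x, t) (x0, t) < d" using x by (simp add: dist_Pair_Pair d'_def dist_commute)
        from dd[OF pK(2) pK(1) this] have nb: "norm (gk \<tau> (x - t) - gk \<tau> (x0 - t)) \<le> e1"
          by (simp add: dist_norm)
        show "onorm ((\<lambda>h. gk \<tau> (x - t) \<bullet> h) - (\<lambda>h. gk \<tau> (x0 - t) \<bullet> h)) \<le> e1"
        proof (rule onorm_bound)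
          show "0 \<le> e1" using e1 by simp
          fix h
          have "norm (((\<lambda>h. gk \<tau> (x - t) \<bullet> h) - (\<lambda>h. gk \<tau> (x0 - t) \<bullet> h)) h)
              = \<bar>(gk \<tau> (x - t) - gk \<tau> (x0 - t)) \<bullet> h\<bar>" by (simp add: inner_diff_left)
          also have "\<dots> \<le> norm (gk \<tau> (x - t) - gk \<tau> (x0 - t)) * norm h"
            by (rule Cauchy_Schwarz_ineq2)
          also have "\<dots> \<le> e1 * norm h" by (rule mult_right_mono[OF nb norm_ge_zero])
          finally show "norm (((\<lambda>h. gk \<tau> (x - t) \<bullet> h) - (\<lambda>h. gk \<tau> (x0 - t) \<bullet> h)) h) \<le> e1 * norm h" .
        qed
      qed
      have eq: "(\<integral>t. kk \<tau> (y - t) * w t \<partial>lborel) - (\<integral>t. kk \<tau> (x0 - t) * w t \<partial>lborel) - G \<bullet> (y - x0)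
          = (\<integral>t. w t * (kk \<tau> (y - t) - kk \<tau> (x0 - t) - gk \<tau> (x0 - t) \<bullet> (y - x0)) \<partial>lborel)"
      proof -
        have "(\<integral>t. (w t *\<^sub>R gk \<tau> (x0 - t)) \<bullet> (y - x0) \<partial>lborel) = G \<bullet> (y - x0)"
          unfolding G_def by (rule integral_inner_left) (use intg in simp)
        then have eqG: "G \<bullet> (y - x0) = (\<integral>t. w t * (gk \<tau> (x0 - t) \<bullet> (y - x0)) \<partial>lborel)"
          by simp
        moreover have ic: "integrable lborel (\<lambda>t. w t * (gk \<tau> (x0 - t) \<bullet> (y - x0)))"
          using integrable_inner_left[OF intg, of "y - x0"] by simp
        have q1: "(\<integral>t. w t * (kk \<tau> (y - t) - kk \<tau> (x0 - t) - gk \<tau> (x0 - t) \<bullet> (y - x0)) \<partial>lborel)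
          = (\<integral>t. (kk \<tau> (y - t) * w t - kk \<tau> (x0 - t) * w t) - w t * (gk \<tau> (x0 - t) \<bullet> (y - x0)) \<partial>lborel)"
          by (rule Bochner_Integration.integral_cong[OF refl]) (simp only: right_diff_distrib mult_ac)
        have q2: "(\<integral>t. (kk \<tau> (y - t) * w t - kk \<tau> (x0 - t) * w t) - w t * (gk \<tau> (x0 - t) \<bullet> (y - x0)) \<partial>lborel)
             = (\<integral>t. (kk \<tau> (y - t) * w t - kk \<tau> (x0 - t) * w t) \<partial>lborel)
             - (\<integral>t. w t * (gk \<tau> (x0 - t) \<bullet> (y - x0)) \<partial>lborel)"
          by (rule Bochner_Integration.integral_diff[OF Bochner_Integration.integrable_diff[OF intk[OF yS] intk[OF x0]] ic])
        have q3: "(\<integral>t. (kk \<tau> (y - t) * w t - kk \<tau> (x0 - t) * w t) \<partial>lborel)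
             = (\<integral>t. kk \<tau> (y - t) * w t \<partial>lborel) - (\<integral>t. kk \<tau> (x0 - t) * w t \<partial>lborel)"
          by (rule Bochner_Integration.integral_diff[OF intk[OF yS] intk[OF x0]])
        show ?thesis unfolding q1 q2 q3 eqG by simp
      qed
      have "norm (\<integral>t. w t * (kk \<tau> (y - t) - kk \<tau> (x0 - t) - gk \<tau> (x0 - t) \<bullet> (y - x0)) \<partial>lborel)
          \<le> (\<integral>t. norm (w t * (kk \<tau> (y - t) - kk \<tau> (x0 - t) - gk \<tau> (x0 - t) \<bullet> (y - x0))) \<partial>lborel)"
        by (rule integral_norm_bound)
      also have "\<dots> \<le> (\<integral>t. indicator S t * (norm (y - x0) * e1) \<partial>lborel)"
      proof (rule integral_mono')
        show "integrable lborel (\<lambda>t. indicator S t * (norm (y - x0) * e1))"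
          using S by (intro integrable_mult_left integrable_real_indicator)
            (auto intro: borel_compact simp: emeasure_compact_finite[OF S, unfolded infinity_ennreal_def])
        fix t
        show "0 \<le> indicator S t * (norm (y - x0) * e1)" using e1 by simp
        show "norm (w t * (kk \<tau> (y - t) - kk \<tau> (x0 - t) - gk \<tau> (x0 - t) \<bullet> (y - x0)))
            \<le> indicator S t * (norm (y - x0) * e1)"
        proof (cases "t \<in> S")
          case True
          have "norm (w t * (kk \<tau> (y - t) - kk \<tau> (x0 - t) - gk \<tau> (x0 - t) \<bullet> (y - x0)))
             = \<bar>w t\<bar> * norm (kk \<tau> (y - t) - kk \<tau> (x0 - t) - gk \<tau> (x0 - t) \<bullet> (y - x0))"
            by (simp add: abs_mult)
          also have "\<dots> \<le> 1 * (norm (y - x0) * e1)"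
            by (rule mult_mono[OF wb pt[OF True]]) auto
          finally show ?thesis using True by simp
        qed (simp add: w0)
      qed
      also have "\<dots> = \<mu> * (norm (y - x0) * e1)"
      proof -
        have "(\<integral>t. indicator S t * (norm (y - x0) * e1) \<partial>lborel)
            = (\<integral>t. indicator S t \<partial>lborel) * (norm (y - x0) * e1)"
          by (rule integral_mult_left_zero)
        also have "(\<integral>t. indicator S t \<partial>lborel) = \<mu>"
          unfolding \<mu>_def by simp
        finally show ?thesis .
      qed
      also have "\<dots> \<le> e * norm (y - x0)"
      proof -
        have me: "\<mu> * e1 \<le> e" unfolding e1_def using e \<mu> by (simp add: field_simps)
        show ?thesis using mult_right_mono[OF me norm_ge_zero[of "y - x0"]] by (simp add: ac_simps)
      qed
      finally show "norm ((\<integral>t. kk \<tau> (y - t) * w t \<partial>lborel) - (\<integral>t. kk \<tau> (x0 - t) * w t \<partial>lborel) - G \<bullet> (y - x0))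
          \<le> e * norm (y - x0)" unfolding eq .
    qed
  qed
qed



lemma integrable_ball:
  fixes g :: "real^3 \<Rightarrow> 'b::{banach,second_countable_topology}"
  assumes "continuous_on (cball c r) g" "g \<in> borel_measurable borel"
  shows "integrable lborel (\<lambda>t. indicator (ball c r) t *\<^sub>R g t)"
  by (rule integrable_w[OF compact_cball assms]) (auto simp: indicator_def)

lemma v_pot_eq: "v_pot \<tau> (indicator (ball c r)) x =
    (1/(4*pi)) * (\<integral>t. kk \<tau> (x - t) * indicator (ball c r) t \<partial>lborel)"
  unfolding v_pot_def kk_def by simp

lemma grad_eq:
  assumes "x \<notin> cball c r"
  shows "grad (v_pot \<tau> (indicator (ball c r))) x =
    (1/(4*pi)) *\<^sub>R (\<integral>t. indicator (ball c r) t *\<^sub>R gk \<tau> (x - t) \<partial>lborel)"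
proof -
  define G where "G = (\<integral>t. indicator (ball c r) t *\<^sub>R gk \<tau> (x - t) \<partial>lborel)"
  have "((\<lambda>x. \<integral>t. kk \<tau> (x - t) * indicator (ball c r) t \<partial>lborel) has_derivative (\<lambda>h. G \<bullet> h)) (at x)"
    unfolding G_def
    by (rule diff_under_int[OF compact_cball assms]) (auto simp: indicator_def)
  then have "((\<lambda>x. (1/(4*pi)) * (\<integral>t. kk \<tau> (x - t) * indicator (ball c r) t \<partial>lborel))
      has_derivative (\<lambda>h. (1/(4*pi)) * (G \<bullet> h))) (at x)"
    by (rule has_derivative_mult_right)
  then have d: "(v_pot \<tau> (indicator (ball c r)) has_derivative (\<lambda>h. (1/(4*pi)) * (G \<bullet> h))) (at x)"
    unfolding v_pot_eq[abs_def] .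
  show ?thesis
    unfolding grad_def partial_deriv_def frechet_derivative_at[OF d, symmetric] G_def[symmetric]
    by (simp add: vec_eq_iff inner_axis)
qed



lemma v_bound:
  assumes \<delta>: "\<delta> > 0" and xd: "\<And>t. t \<in> cball c r \<Longrightarrow> \<delta> \<le> norm (x - t)"
  shows "\<bar>v_pot \<tau> (indicator (ball c r)) x\<bar> \<le>
     (1/(4*pi)) * ((\<integral>t. indicator (ball c r) t * exp (-\<tau> * norm (x - t)) \<partial>lborel) / \<delta>)"
proof -
  have "\<bar>\<integral>t. kk \<tau> (x - t) * indicator (ball c r) t \<partial>lborel\<bar>
      \<le> (\<integral>t. norm (kk \<tau> (x - t) * indicator (ball c r) t) \<partial>lborel)"
    using integral_norm_bound[of lborel "\<lambda>t. kk \<tau> (x - t) * indicator (ball c r) t"] by simp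
  also have "\<dots> \<le> (\<integral>t. indicator (ball c r) t * exp (-\<tau> * norm (x - t)) / \<delta> \<partial>lborel)"
  proof (rule integral_mono')
    have "integrable lborel (\<lambda>t. indicator (ball c r) t *\<^sub>R exp (-\<tau> * norm (x - t)))"
      by (rule integrable_ball) (intro continuous_intros, measurable)
    then show "integrable lborel (\<lambda>t. indicator (ball c r) t * exp (-\<tau> * norm (x - t)) / \<delta>)"
      by simp
    fix t
    show "0 \<le> indicator (ball c r) t * exp (-\<tau> * norm (x - t)) / \<delta>" using \<delta> by simp
    show "norm (kk \<tau> (x - t) * indicator (ball c r) t) \<le> indicator (ball c r) t * exp (-\<tau> * norm (x - t)) / \<delta>"
    proof (cases "t \<in> ball c r")
      case True
      then have d: "\<delta> \<le> norm (x - t)" using xd by auto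
      have "exp (-\<tau> * norm (x - t)) / norm (x - t) \<le> exp (-\<tau> * norm (x - t)) / \<delta>"
        using d \<delta> by (intro divide_left_mono mult_pos_pos) auto
      then show ?thesis using True by (simp add: kk_def)
    qed simp
  qed
  also have "\<dots> = (\<integral>t. indicator (ball c r) t * exp (-\<tau> * norm (x - t)) \<partial>lborel) / \<delta>"
    by (rule integral_divide_zero)
  finally have h: "\<bar>\<integral>t. kk \<tau> (x - t) * indicator (ball c r) t \<partial>lborel\<bar>
     \<le> (\<integral>t. indicator (ball c r) t * exp (-\<tau> * norm (x - t)) \<partial>lborel) / \<delta>" .
  show ?thesis unfolding v_pot_eq abs_mult by (rule mult_mono[OF _ h]) auto
qed

lemma norm_gk: assumes "\<tau> \<ge> 0" shows "norm (gk \<tau> z) = exp (-\<tau> * norm z) * (\<tau> * norm z + 1) / norm z ^ 2"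
proof (cases "z = 0")
  case False
  have "\<tau> * norm z + 1 \<ge> 0" using assms by simp
  then show ?thesis unfolding gk_def using False
    by (simp add: abs_mult power2_eq_square power3_eq_cube abs_divide)
qed (simp add: gk_def)

lemma grad_bound:
  assumes \<delta>: "\<delta> > 0" and \<tau>: "\<tau> \<ge> 0" and xd: "\<And>t. t \<in> cball c r \<Longrightarrow> \<delta> \<le> norm (x - t)"
  shows "norm (grad (v_pot \<tau> (indicator (ball c r))) x) \<le>
     (1/(4*pi)) * ((\<tau>/\<delta> + 1/\<delta>^2) * (\<integral>t. indicator (ball c r) t * exp (-\<tau> * norm (x - t)) \<partial>lborel))"
proof -
  have xn: "x \<notin> cball c r" using xd[of x] \<delta> by force
  have "norm (\<integral>t. indicator (ball c r) t *\<^sub>R gk \<tau> (x - t) \<partial>lborel)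
      \<le> (\<integral>t. norm (indicator (ball c r) t *\<^sub>R gk \<tau> (x - t)) \<partial>lborel)"
    by (rule integral_norm_bound)
  also have "\<dots> \<le> (\<integral>t. (\<tau>/\<delta> + 1/\<delta>^2) * (indicator (ball c r) t * exp (-\<tau> * norm (x - t))) \<partial>lborel)"
  proof (rule integral_mono')
    have "integrable lborel (\<lambda>t. indicator (ball c r) t *\<^sub>R exp (-\<tau> * norm (x - t)))"
      by (rule integrable_ball) (intro continuous_intros, measurable)
    then show "integrable lborel (\<lambda>t. (\<tau>/\<delta> + 1/\<delta>^2) * (indicator (ball c r) t * exp (-\<tau> * norm (x - t))))"
      by simp
    fix t
    show "0 \<le> (\<tau>/\<delta> + 1/\<delta>^2) * (indicator (ball c r) t * exp (-\<tau> * norm (x - t)))"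
      using \<delta> \<tau> by simp
    show "norm (indicator (ball c r) t *\<^sub>R gk \<tau> (x - t)) \<le> (\<tau>/\<delta> + 1/\<delta>^2) * (indicator (ball c r) t * exp (-\<tau> * norm (x - t)))"
    proof (cases "t \<in> ball c r")
      case True
      define n where "n = norm (x - t)"
      have d: "\<delta> \<le> n" using xd True by (auto simp: n_def)
      have "(\<tau> * n + 1) / n^2 = \<tau>/n + 1/n^2" using d \<delta> by (simp add: field_simps power2_eq_square)
      also have "\<dots> \<le> \<tau>/\<delta> + 1/\<delta>^2"
        using d \<delta> \<tau> by (intro add_mono divide_left_mono power_mono mult_pos_pos) auto
      finally have "exp (-\<tau> * n) * ((\<tau> * n + 1) / n^2) \<le> exp (-\<tau> * n) * (\<tau>/\<delta> + 1/\<delta>^2)"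
        by (intro mult_left_mono) auto
      then show ?thesis using True norm_gk[OF \<tau>, of "x - t"] by (simp add: n_def mult_ac)
    qed simp
  qed
  also have "\<dots> = (\<tau>/\<delta> + 1/\<delta>^2) * (\<integral>t. indicator (ball c r) t * exp (-\<tau> * norm (x - t)) \<partial>lborel)"
    by (rule integral_mult_right_zero)
  finally have h: "norm (\<integral>t. indicator (ball c r) t *\<^sub>R gk \<tau> (x - t) \<partial>lborel) \<le>
     (\<tau>/\<delta> + 1/\<delta>^2) * (\<integral>t. indicator (ball c r) t * exp (-\<tau> * norm (x - t)) \<partial>lborel)" .
  show ?thesis unfolding grad_eq[OF xn] norm_scaleR by (rule mult_mono[OF _ h]) auto
qed

lemma E_bound:
  fixes c x :: "real^3"
  assumes \<tau>: "\<tau> \<ge> 0"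
  shows "(\<integral>t. indicator (ball c r) t * exp (-\<tau> * norm (x - t)) \<partial>lborel) \<le>
     exp (-\<tau> * (norm (x - c) - r)) * (\<integral>t. indicator (ball c r) t * exp (-\<tau> * (r - norm (t - c))) \<partial>lborel)"
proof -
  have "(\<integral>t. indicator (ball c r) t * exp (-\<tau> * norm (x - t)) \<partial>lborel) \<le>
     (\<integral>t. exp (-\<tau> * (norm (x - c) - r)) * (indicator (ball c r) t * exp (-\<tau> * (r - norm (t - c)))) \<partial>lborel)"
  proof (rule integral_mono')
    have "integrable lborel (\<lambda>t. indicator (ball c r) t *\<^sub>R exp (-\<tau> * (r - norm (t - c))))"
      by (rule integrable_ball[where g="\<lambda>t. exp (-\<tau> * (r - norm (t - c)))"]) (intro continuous_intros, measurable)
    then show "integrable lborel (\<lambda>t. exp (-\<tau> * (norm (x - c) - r)) * (indicator (ball c r) t * exp (-\<tau> * (r - norm (t - c)))))"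
      by simp
    fix t
    show "0 \<le> exp (-\<tau> * (norm (x - c) - r)) * (indicator (ball c r) t * exp (-\<tau> * (r - norm (t - c))))"
      by simp
    show "indicator (ball c r) t * exp (-\<tau> * norm (x - t)) \<le> exp (-\<tau> * (norm (x - c) - r)) * (indicator (ball c r) t * exp (-\<tau> * (r - norm (t - c))))"
    proof (cases "t \<in> ball c r")
      case True
      have "norm (x - c) \<le> norm (x - t) + norm (t - c)" using norm_triangle_ineq[of "x - t" "t - c"] by simp
      then have "\<tau> * norm (x - c) \<le> \<tau> * (norm (x - t) + norm (t - c))"
        using \<tau> by (rule mult_left_mono)
      then have "-\<tau> * norm (x - t) \<le> -\<tau> * (norm (x - c) - r) + -\<tau> * (r - norm (t - c))"
        by (simp add: algebra_simps)
      then have "exp (-\<tau> * norm (x - t)) \<le> exp (-\<tau> * (norm (x - c) - r)) * exp (-\<tau> * (r - norm (t - c)))"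
        by (simp add: exp_add[symmetric])
      then show ?thesis using True by simp
    qed simp
  qed
  also have "\<dots> = exp (-\<tau> * (norm (x - c) - r)) * (\<integral>t. indicator (ball c r) t * exp (-\<tau> * (r - norm (t - c))) \<partial>lborel)"
    by (rule integral_mult_right_zero)
  finally show ?thesis .
qed

lemma measure_ball3: "r \<ge> 0 \<Longrightarrow> measure lborel (ball (c::real^3) r) = r^3 * measure lborel (ball (0::real^3) 1)"
  using content_ball_conv_unit_ball[of r c] by simp

lemma exp_neg_le_inv: "(u::real) > 0 \<Longrightarrow> exp (- u) \<le> 1 / u"
proof -
  assume u: "u > 0"
  have "u \<le> exp u" using exp_ge_add_one_self[of u] by linarith
  then show ?thesis using u by (simp add: exp_minus field_simps)
qed

lemma A_bound:
  fixes c :: "real^3"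
  assumes r: "r > 0" and \<tau>: "\<tau> > 0" and big: "1 < sqrt \<tau> * r"
  shows "(\<integral>t. indicator (ball c r) t * exp (-\<tau> * (r - norm (t - c))) \<partial>lborel) \<le>
     (r^3 * measure lborel (ball (0::real^3) 1) + 3 * r^2 * measure lborel (ball (0::real^3) 1)) / sqrt \<tau>"
proof -
  define U where "U = measure lborel (ball (0::real^3) 1)"
  have U: "U \<ge> 0" by (simp add: U_def)
  define q where "q = sqrt \<tau>"
  have q: "q > 0" using \<tau> by (simp add: q_def)
  have qq: "q * q = \<tau>" using \<tau> by (simp add: q_def)
  define s where "s = 1 / q"
  have s: "s > 0" "s < r" using q big by (auto simp: s_def q_def field_simps)
  have fin: "emeasure lborel (ball c \<rho>) < \<infinity>" for \<rho> using emeasure_lborel_ball_finite .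
  have intI: "integrable lborel (indicator (ball c \<rho>) :: real^3 \<Rightarrow> real)" for \<rho>
    by (rule integrable_real_indicator) (auto simp: emeasure_lborel_ball_finite[unfolded infinity_ennreal_def])
  have intS: "integrable lborel (indicator (ball c r - ball c (r - s)) :: real^3 \<Rightarrow> real)"
    by (rule integrable_real_indicator)
      (auto intro: le_less_trans[OF emeasure_mono emeasure_lborel_ball_finite[unfolded infinity_ennreal_def]])
  have "(\<integral>t. indicator (ball c r) t * exp (-\<tau> * (r - norm (t - c))) \<partial>lborel) \<le>
     (\<integral>t. exp (-q) * indicator (ball c r) t + indicator (ball c r - ball c (r - s)) t \<partial>lborel)"
  proof (rule integral_mono')
    show "integrable lborel (\<lambda>t. exp (-q) * indicator (ball c r) t + indicator (ball c r - ball c (r - s)) t)"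
      using intI intS by simp
    fix t
    show "0 \<le> exp (-q) * indicator (ball c r) t + indicator (ball c r - ball c (r - s)) t" by simp
    show "indicator (ball c r) t * exp (-\<tau> * (r - norm (t - c))) \<le> exp (-q) * indicator (ball c r) t + indicator (ball c r - ball c (r - s)) t"
    proof (cases "t \<in> ball c r")
      case True
      show ?thesis
      proof (cases "t \<in> ball c (r - s)")
        case True2: True
        then have "norm (t - c) < r - s" by (simp add: dist_norm norm_minus_commute)
        then have "s \<le> r - norm (t - c)" by simp
        then have "\<tau> * s \<le> \<tau> * (r - norm (t - c))" using \<tau> by (intro mult_left_mono) auto
        moreover have "\<tau> * s = q" using qq q by (simp add: s_def field_simps)
        ultimately have "exp (-\<tau> * (r - norm (t - c))) \<le> exp (-q)" by simp
        then show ?thesis using True True2 by simp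
      next
        case False
        have "r - norm (t - c) \<ge> 0" using True by (simp add: dist_norm norm_minus_commute)
        then have h1: "exp (-\<tau> * (r - norm (t - c))) \<le> 1" using \<tau> by simp
        have lhs: "indicator (ball c r) t * exp (-\<tau> * (r - norm (t - c))) = exp (-\<tau> * (r - norm (t - c)))"
          using True by simp
        have rhs: "exp (-q) * indicator (ball c r) t + indicator (ball c r - ball c (r - s)) t = exp (-q) + 1"
          using True False by simp
        show ?thesis unfolding lhs rhs using h1 exp_gt_zero[of "-q"] by linarith
      qed
    qed simp
  qed
  also have "\<dots> = exp (-q) * measure lborel (ball c r) + measure lborel (ball c r - ball c (r - s))"
    using intI intS by simp
  also have "measure lborel (ball c r - ball c (r - s)) = measure lborel (ball c r) - measure lborel (ball c (r - s))"
  proof (rule measure_Diff)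
    show "emeasure lborel (ball c r) \<noteq> \<infinity>" using emeasure_lborel_ball_finite[of c r] by simp
    show "ball c (r - s) \<subseteq> ball c r" using s by (intro subset_ball) auto
    show "ball c r \<in> sets lborel" by simp
    show "ball c (r - s) \<in> sets lborel" by simp
  qed
  also have "exp (-q) * measure lborel (ball c r) + (measure lborel (ball c r) - measure lborel (ball c (r - s)))
      = exp (-q) * (r^3 * U) + (r^3 - (r - s)^3) * U"
  proof -
    have m1: "measure lborel (ball c r) = r^3 * U" using measure_ball3[of r c] r by (simp add: U_def)
    have m2: "measure lborel (ball c (r - s)) = (r - s)^3 * U" using measure_ball3[of "r - s" c] s by (simp add: U_def)
    show ?thesis unfolding m1 m2 by (simp only: left_diff_distrib)
  qed
  also have "\<dots> \<le> (1/q) * (r^3 * U) + (3 * r^2 * s) * U"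
  proof (intro add_mono mult_right_mono)
    show "exp (-q) \<le> 1 / q" using exp_neg_le_inv[OF q] .
    have "r^3 - (r - s)^3 = s * (r^2 + r * (r - s) + (r - s)^2)" by (simp add: algebra_simps power2_eq_square power3_eq_cube)
    also have "\<dots> \<le> s * (r^2 + r * r + r^2)"
      using s r by (intro mult_left_mono add_mono power_mono mult_left_mono) auto
    finally show "r^3 - (r - s)^3 \<le> 3 * r^2 * s" by (simp add: power2_eq_square algebra_simps)
  qed (use U r in auto)
  also have "\<dots> = (r^3 * U + 3 * r^2 * U) / q" by (simp add: s_def add_divide_distrib)
  finally show ?thesis by (simp add: U_def q_def)
qed



lemma sphere_point:
  fixes x c :: "real^3"
  assumes r: "r > 0" and x: "norm (x - c) > r"
  obtains y where "y \<in> sphere c r" "norm (x - y) = norm (x - c) - r"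
proof
  define n where "n = norm (x - c)"
  have n: "n > 0" using x r unfolding n_def by linarith
  define y where "y = c + (r / n) *\<^sub>R (x - c)"
  show "y \<in> sphere c r" using n r by (simp add: y_def dist_norm n_def)
  have "x - y = (1 - r / n) *\<^sub>R (x - c)" by (simp add: y_def algebra_simps)
  moreover have "1 - r / n \<ge> 0" using n x by (simp add: n_def)
  ultimately have "norm (x - y) = (1 - r / n) * n" by (simp add: n_def)
  also have "\<dots> = n - r" using n by (simp add: field_simps)
  finally show "norm (x - y) = norm (x - c) - r" by (simp add: n_def)
qed

lemma inf_le:
  fixes D :: "(real^3) set" and c c' x :: "real^3"
  assumes r: "r > 0" "r' > 0" and x: "x \<in> D"
    and disj: "cball c r \<inter> closure D = {}" "cball c' r' \<inter> closure D = {}"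
  shows "Inf {phi x y y' | x y y'. x \<in> frontier D \<and> y \<in> sphere c r \<and> y' \<in> sphere c' r'}
     \<le> (norm (x - c) - r) + (norm (x - c') - r')"
proof -
  have xc: "norm (x - c) > r"
  proof (rule ccontr)
    assume "\<not> ?thesis" then have "x \<in> cball c r" by (simp add: dist_norm norm_minus_commute)
    then show False using disj(1) x closure_subset by blast
  qed
  have xc': "norm (x - c') > r'"
  proof (rule ccontr)
    assume "\<not> ?thesis" then have "x \<in> cball c' r'" by (simp add: dist_norm norm_minus_commute)
    then show False using disj(2) x closure_subset by blast
  qed
  obtain y where y: "y \<in> sphere c r" "norm (x - y) = norm (x - c) - r"
    using sphere_point[OF r(1) xc] by blast
  obtain y' where y': "y' \<in> sphere c' r'" "norm (x - y') = norm (x - c') - r'"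
    using sphere_point[OF r(2) xc'] by blast
  have "y \<in> cball c r" using y(1) by simp
  then have yD: "y \<notin> D" using disj(1) closure_subset by blast
  have "closed_segment x y \<inter> frontier D \<noteq> {}"
  proof (rule connected_Int_frontier)
    show "connected (closed_segment x y)" by simp
    show "closed_segment x y \<inter> D \<noteq> {}" using x by auto
    show "closed_segment x y - D \<noteq> {}" using yD by auto
  qed
  then obtain z where z: "z \<in> closed_segment x y" "z \<in> frontier D" by blast
  have "dist x y = dist x z + dist z y"
    using z(1) between[of x y z] between_mem_segment[of x y z] by simp
  then have zy: "norm (y - z) + norm (z - x) = norm (x - y)"
    by (simp add: dist_norm norm_minus_commute)
  have "phi z y y' \<le> norm (x - y) + norm (x - y')"
    unfolding phi_def using norm_triangle_ineq[of "z - x" "x - y'"] zy by simp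
  moreover have "Inf {phi x y y' | x y y'. x \<in> frontier D \<and> y \<in> sphere c r \<and> y' \<in> sphere c' r'} \<le> phi z y y'"
  proof (rule cInf_lower)
    show "phi z y y' \<in> {phi x y y' | x y y'. x \<in> frontier D \<and> y \<in> sphere c r \<and> y' \<in> sphere c' r'}"
      using z(2) y(1) y'(1) by blast
    show "bdd_below {phi x y y' | x y y'. x \<in> frontier D \<and> y \<in> sphere c r \<and> y' \<in> sphere c' r'}"
      by (rule bdd_belowI[of _ 0]) (auto simp: phi_def)
  qed
  ultimately show ?thesis using y(2) y'(2) by linarith
qed

lemma E_full:
  fixes c x :: "real^3"
  assumes r: "r > 0" and \<tau>: "\<tau> \<ge> 1" and big: "1 < sqrt \<tau> * r"
  shows "(\<integral>t. indicator (ball c r) t * exp (-\<tau> * norm (x - t)) \<partial>lborel) \<le>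
     exp (-\<tau> * (norm (x - c) - r)) * ((r^3 * measure lborel (ball (0::real^3) 1) + 3 * r^2 * measure lborel (ball (0::real^3) 1)) / sqrt \<tau>)"
proof -
  have "(\<integral>t. indicator (ball c r) t * exp (-\<tau> * norm (x - t)) \<partial>lborel) \<le>
     exp (-\<tau> * (norm (x - c) - r)) * (\<integral>t. indicator (ball c r) t * exp (-\<tau> * (r - norm (t - c))) \<partial>lborel)"
    using E_bound[of \<tau> c r x] \<tau> by simp
  also have "\<dots> \<le> exp (-\<tau> * (norm (x - c) - r)) * ((r^3 * measure lborel (ball (0::real^3) 1) + 3 * r^2 * measure lborel (ball (0::real^3) 1)) / sqrt \<tau>)"
    using A_bound[OF r _ big, of c] \<tau> by (intro mult_left_mono) auto
  finally show ?thesis .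
qed

lemma pointwise:
  fixes x c c' :: "real^3"
  assumes \<delta>: "\<delta> > 0" and r: "r > 0" "r' > 0" and \<tau>: "\<tau> \<ge> 1"
    and big: "1 < sqrt \<tau> * r" "1 < sqrt \<tau> * r'"
    and xd: "\<And>t. t \<in> cball c r \<Longrightarrow> \<delta> \<le> norm (x - t)"
    and xd': "\<And>t. t \<in> cball c' r' \<Longrightarrow> \<delta> \<le> norm (x - t)"
    and dm: "m \<le> (norm (x - c) - r) + (norm (x - c') - r')"
  shows "\<bar>grad (v_pot \<tau> (indicator (ball c r))) x \<bullet> grad (v_pot \<tau> (indicator (ball c' r'))) x
      + \<tau>\<^sup>2 * v_pot \<tau> (indicator (ball c r)) x * v_pot \<tau> (indicator (ball c' r')) x\<bar>
     \<le> ((1/(4*pi))^2 * ((1/\<delta> + 1/\<delta>^2)^2 + 1/\<delta>^2)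
         * (r^3 * measure lborel (ball (0::real^3) 1) + 3 * r^2 * measure lborel (ball (0::real^3) 1))
         * (r'^3 * measure lborel (ball (0::real^3) 1) + 3 * r'^2 * measure lborel (ball (0::real^3) 1)))
        * (\<tau> * exp (- \<tau> * m))"
proof -
  define U where "U = measure lborel (ball (0::real^3) 1)"
  have U: "U \<ge> 0" by (simp add: U_def)
  define Cf where "Cf = r^3 * U + 3 * r^2 * U"
  define Cg where "Cg = r'^3 * U + 3 * r'^2 * U"
  have Cf: "Cf \<ge> 0" "Cg \<ge> 0" using U r by (simp_all add: Cf_def Cg_def)
  define Ef where "Ef = (\<integral>t. indicator (ball c r) t * exp (-\<tau> * norm (x - t)) \<partial>lborel)"
  define Eg where "Eg = (\<integral>t. indicator (ball c' r') t * exp (-\<tau> * norm (x - t)) \<partial>lborel)"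
  have E0: "Ef \<ge> 0" "Eg \<ge> 0" unfolding Ef_def Eg_def by simp_all
  define vf where "vf = v_pot \<tau> (indicator (ball c r)) x"
  define vg where "vg = v_pot \<tau> (indicator (ball c' r')) x"
  define gf where "gf = grad (v_pot \<tau> (indicator (ball c r))) x"
  define gg where "gg = grad (v_pot \<tau> (indicator (ball c' r'))) x"
  define a where "a = \<tau>/\<delta> + 1/\<delta>^2"
  define b where "b = 1/\<delta> + 1/\<delta>^2"
  define k where "k = 1/(4*pi)"
  have k: "k > 0" by (simp add: k_def)
  have a0: "a \<ge> 0" using \<delta> \<tau> by (simp add: a_def)
  have \<tau>0: "\<tau> \<ge> 0" using \<tau> by simp
  have hvf: "\<bar>vf\<bar> \<le> k * (Ef / \<delta>)" unfolding vf_def k_def Ef_def by (rule v_bound[OF \<delta> xd])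
  have hvg: "\<bar>vg\<bar> \<le> k * (Eg / \<delta>)" unfolding vg_def k_def Eg_def by (rule v_bound[OF \<delta> xd'])
  have hgf: "norm gf \<le> k * (a * Ef)" unfolding gf_def k_def Ef_def a_def by (rule grad_bound[OF \<delta> \<tau>0 xd])
  have hgg: "norm gg \<le> k * (a * Eg)" unfolding gg_def k_def Eg_def a_def by (rule grad_bound[OF \<delta> \<tau>0 xd'])
  have "\<bar>gf \<bullet> gg + \<tau>\<^sup>2 * vf * vg\<bar> \<le> norm gf * norm gg + \<tau>\<^sup>2 * (\<bar>vf\<bar> * \<bar>vg\<bar>)"
  proof -
    have "\<bar>gf \<bullet> gg + \<tau>\<^sup>2 * vf * vg\<bar> \<le> \<bar>gf \<bullet> gg\<bar> + \<bar>\<tau>\<^sup>2 * vf * vg\<bar>" by (rule abs_triangle_ineq)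
    also have "\<bar>gf \<bullet> gg\<bar> \<le> norm gf * norm gg" by (rule Cauchy_Schwarz_ineq2)
    also have "\<bar>\<tau>\<^sup>2 * vf * vg\<bar> = \<tau>\<^sup>2 * (\<bar>vf\<bar> * \<bar>vg\<bar>)" by (simp add: abs_mult)
    finally show ?thesis by simp
  qed
  also have "\<dots> \<le> (k * (a * Ef)) * (k * (a * Eg)) + \<tau>\<^sup>2 * ((k * (Ef / \<delta>)) * (k * (Eg / \<delta>)))"
    using k a0 E0 \<delta> by (intro add_mono mult_mono mult_left_mono hgf hgg hvf hvg) auto
  also have "\<dots> = k^2 * (a^2 + \<tau>^2 / \<delta>^2) * (Ef * Eg)"
    by (simp add: power2_eq_square field_simps)
  also have "\<dots> \<le> k^2 * (\<tau>^2 * (b^2 + 1/\<delta>^2)) * (Ef * Eg)"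
  proof (intro mult_right_mono mult_left_mono)
    have "a \<le> \<tau> * b"
    proof -
      have "1/\<delta>^2 \<le> \<tau> * (1/\<delta>^2)" using divide_right_mono[OF \<tau>, of "\<delta>^2"] by simp
      then show ?thesis unfolding a_def b_def by (simp add: algebra_simps)
    qed
    then have "a^2 \<le> (\<tau> * b)^2" using a0 by (intro power_mono) auto
    then show "a^2 + \<tau>^2 / \<delta>^2 \<le> \<tau>^2 * (b^2 + 1/\<delta>^2)" by (simp add: algebra_simps power_mult_distrib)
  qed (use E0 in auto)
  also have "Ef * Eg \<le> (exp (-\<tau> * (norm (x - c) - r)) * (Cf / sqrt \<tau>)) * (exp (-\<tau> * (norm (x - c') - r')) * (Cg / sqrt \<tau>))"
  proof (rule mult_mono)
    show "Ef \<le> exp (-\<tau> * (norm (x - c) - r)) * (Cf / sqrt \<tau>)"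
      unfolding Ef_def Cf_def U_def by (rule E_full[OF r(1) \<tau> big(1)])
    show "Eg \<le> exp (-\<tau> * (norm (x - c') - r')) * (Cg / sqrt \<tau>)"
      unfolding Eg_def Cg_def U_def by (rule E_full[OF r(2) \<tau> big(2)])
  qed (use E0 Cf \<tau> in \<open>auto intro!: divide_nonneg_nonneg mult_nonneg_nonneg\<close>)
  also have "(exp (-\<tau> * (norm (x - c) - r)) * (Cf / sqrt \<tau>)) * (exp (-\<tau> * (norm (x - c') - r')) * (Cg / sqrt \<tau>))
      = exp (-\<tau> * ((norm (x - c) - r) + (norm (x - c') - r'))) * (Cf * Cg / \<tau>)"
    using \<tau> by (simp add: exp_add[symmetric] algebra_simps)
  also have "\<dots> \<le> exp (-\<tau> * m) * (Cf * Cg / \<tau>)"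
    using dm \<tau> Cf by (intro mult_right_mono) (auto intro!: mult_left_mono)
  finally have "\<bar>gf \<bullet> gg + \<tau>\<^sup>2 * vf * vg\<bar> \<le> k^2 * (\<tau>^2 * (b^2 + 1/\<delta>^2)) * (exp (-\<tau> * m) * (Cf * Cg / \<tau>))"
    using k by (simp add: mult_left_mono)
  also have "\<dots> = (k^2 * (b^2 + 1/\<delta>^2) * Cf * Cg) * (\<tau> * exp (-\<tau> * m))"
    using \<tau> by (simp add: power2_eq_square field_simps)
  finally show ?thesis unfolding gf_def gg_def vf_def vg_def k_def b_def Cf_def Cg_def U_def .
qed

theorem lemma2p3:
  fixes D :: "(real^3) set" and c c' :: "real^3" and r r' :: real
  assumes "open D" "bounded D" "D \<noteq> {}" "C2_boundary D"
    and "r > 0" "r' > 0"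
    and "cball c r \<inter> closure D = {}" "cball c' r' \<inter> closure D = {}"
  shows "(\<lambda>\<tau>. J_fun D \<tau> (indicator (ball c r)) (indicator (ball c' r')))
           \<in> O[at_top](\<lambda>\<tau>. \<tau> * exp (- \<tau> *
               Inf {phi x y y' | x y y'. x \<in> frontier D \<and> y \<in> sphere c r \<and> y' \<in> sphere c' r'}))"
proof -
  note r = assms(5,6)
  note disj = assms(7,8)
  define m where "m = Inf {phi x y y' | x y y'. x \<in> frontier D \<and> y \<in> sphere c r \<and> y' \<in> sphere c' r'}"
  obtain \<delta> where \<delta>: "\<delta> > 0" and \<delta>d: "\<forall>x\<in>closure D. \<forall>t\<in>cball c r \<union> cball c' r'. \<delta> \<le> dist x t"
  proof -
    have "compact (closure D)" using assms(2) by (simp add: compact_closure)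
    moreover have "closed (cball c r \<union> cball c' r')" by auto
    moreover have "closure D \<inter> (cball c r \<union> cball c' r') = {}" using disj by auto
    ultimately show ?thesis using separate_compact_closed that by blast
  qed
  define U where "U = measure lborel (ball (0::real^3) 1)"
  define M where "M = (1/(4*pi))^2 * ((1/\<delta> + 1/\<delta>^2)^2 + 1/\<delta>^2)
         * (r^3 * U + 3 * r^2 * U) * (r'^3 * U + 3 * r'^2 * U)"
  have M: "M \<ge> 0" using r by (simp add: M_def U_def)
  define \<mu> where "\<mu> = measure lborel D"
  have Dm: "D \<in> sets lborel" using assms(1) by simp
  have Dfin: "emeasure lborel D < \<infinity>" using emeasure_bounded_finite[OF assms(2)] .
  define \<tau>0 where "\<tau>0 = 1 + 1/r^2 + 1/r'^2"
  have ev: "eventually (\<lambda>\<tau>. \<tau> \<ge> \<tau>0) at_top" by (rule eventually_ge_at_top)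
  show ?thesis unfolding m_def[symmetric]
  proof (rule bigoI[where c = "M * \<mu>"])
    show "eventually (\<lambda>\<tau>. norm (J_fun D \<tau> (indicator (ball c r)) (indicator (ball c' r')))
        \<le> M * \<mu> * norm (\<tau> * exp (- \<tau> * m))) at_top"
      using ev
    proof eventually_elim
      case (elim \<tau>)
      have rr: "1/r^2 > 0" "1/r'^2 > 0" using r by simp_all
      have \<tau>: "\<tau> \<ge> 1" using elim rr unfolding \<tau>0_def by linarith
      have bigr: "1 < sqrt \<tau> * \<rho>" if "\<rho> > 0" "1/\<rho>^2 < \<tau>" for \<rho> :: real
      proof -
        have "sqrt ((1/\<rho>)^2) < sqrt \<tau>" using that by (simp add: power_divide)
        then have "1/\<rho> < sqrt \<tau>" using that by simp
        then show ?thesis using that by (simp add: field_simps)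
      qed
      have big: "1 < sqrt \<tau> * r" "1 < sqrt \<tau> * r'"
      proof -
        have "1/r^2 < \<tau>" "1/r'^2 < \<tau>" using elim rr unfolding \<tau>0_def by linarith+
        then show "1 < sqrt \<tau> * r" "1 < sqrt \<tau> * r'" using r bigr by blast+
      qed
      define F where "F = (\<lambda>x. grad (v_pot \<tau> (indicator (ball c r))) x \<bullet> grad (v_pot \<tau> (indicator (ball c' r'))) x
          + \<tau>\<^sup>2 * v_pot \<tau> (indicator (ball c r)) x * v_pot \<tau> (indicator (ball c' r')) x)"
      have pw: "\<bar>F x\<bar> \<le> M * (\<tau> * exp (- \<tau> * m))" if x: "x \<in> D" for x
        unfolding F_def M_def U_def
      proof (rule pointwise[OF \<delta> r \<tau> big])
        have xc: "x \<in> closure D" using x closure_subset by blast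
        show "\<delta> \<le> norm (x - t)" if "t \<in> cball c r" for t
          using \<delta>d xc that by (metis UnI1 dist_norm)
        show "\<delta> \<le> norm (x - t)" if "t \<in> cball c' r'" for t
          using \<delta>d xc that by (metis UnI2 dist_norm)
        show "m \<le> norm (x - c) - r + (norm (x - c') - r')"
          unfolding m_def by (rule inf_le[OF r x disj])
      qed
      have "norm (J_fun D \<tau> (indicator (ball c r)) (indicator (ball c' r')))
          = norm (\<integral>x. indicator D x *\<^sub>R F x \<partial>lborel)"
        unfolding J_fun_def set_lebesgue_integral_def F_def ..
      also have "\<dots> \<le> (\<integral>x. norm (indicator D x *\<^sub>R F x) \<partial>lborel)" by (rule integral_norm_bound)
      also have "\<dots> \<le> (\<integral>x. indicator D x * (M * (\<tau> * exp (- \<tau> * m))) \<partial>lborel)"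
      proof (rule integral_mono')
        show "integrable lborel (\<lambda>x. indicator D x * (M * (\<tau> * exp (- \<tau> * m))))"
          using Dm Dfin by (intro integrable_mult_left integrable_real_indicator) auto
        fix x
        show "0 \<le> indicator D x * (M * (\<tau> * exp (- \<tau> * m)))" using M \<tau> by simp
        show "norm (indicator D x *\<^sub>R F x) \<le> indicator D x * (M * (\<tau> * exp (- \<tau> * m)))"
          using pw[of x] by (cases "x \<in> D") auto
      qed
      also have "\<dots> = \<mu> * (M * (\<tau> * exp (- \<tau> * m)))"
        unfolding \<mu>_def by (simp add: integral_mult_left_zero)
      also have "\<dots> = M * \<mu> * norm (\<tau> * exp (- \<tau> * m))" using \<tau> by simp
      finally show ?case .
    qed
  qed
qed


end
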